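(* Let $\epsilon>0$, let $f(\cdot)$ be any function, and let $\mathcal{I}$ be a bin packing input made up solely of large items (items of size at least $\epsilon$). Then any packing of $\mathcal{I}$ into unit bins using at most $(1+\epsilon)\cdot OPT(\mathcal{I})+f(\epsilon^{-1})$ bins has all but at most $2\epsilon\cdot OPT(\mathcal{I})+2f(\epsilon^{-1})+3$ of its bins either containing no large items or being more than half filled by large items (i.e., the total size of large items in the bin exceeds $1/2$).
   Context: $OPT(\mathcal{I})$ denotes the minimum number of unit-capacity bins into which the items of $\mathcal{I}$ can be packed. *)

theory Defs
  imports Main "HOL.Real"
begin

definition bp_input :: "real list \<Rightarrow> bool" where
  "bp_input xs \<longleftrightarrow> (\<forall>x\<in>set xs. 0 < x \<and> x \<le> 1)"

definition bin_load :: "real list \<Rightarrow> (nat \<Rightarrow> nat) \<Rightarrow> nat \<Rightarrow> real" where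
  "bin_load xs b j = (\<Sum>i\<in>{i. i < length xs \<and> b i = j}. xs ! i)"

definition is_packing :: "real list \<Rightarrow> nat \<Rightarrow> (nat \<Rightarrow> nat) \<Rightarrow> bool" where
  "is_packing xs m b \<longleftrightarrow> (\<forall>i<length xs. b i < m) \<and> (\<forall>j<m. bin_load xs b j \<le> 1)"

definition OPT :: "real list \<Rightarrow> nat" where
  "OPT xs = (LEAST m. \<exists>b. is_packing xs m b)"

definition large_load :: "real \<Rightarrow> real list \<Rightarrow> (nat \<Rightarrow> nat) \<Rightarrow> nat \<Rightarrow> real" where
  "large_load eps xs b j = (\<Sum>i\<in>{i. i < length xs \<and> b i = j \<and> eps \<le> xs ! i}. xs ! i)"

definition has_large_item :: "real \<Rightarrow> real list \<Rightarrow> (nat \<Rightarrow> nat) \<Rightarrow> nat \<Rightarrow> bool" where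
  "has_large_item eps xs b j \<longleftrightarrow> (\<exists>i<length xs. b i = j \<and> eps \<le> xs ! i)"

end

theory Submission
  imports Defs
begin

definition usedb :: "real list \<Rightarrow> (nat \<Rightarrow> nat) \<Rightarrow> nat set" where
  "usedb xs b = b ` {..<length xs}"

definition badb :: "real \<Rightarrow> real list \<Rightarrow> nat \<Rightarrow> (nat \<Rightarrow> nat) \<Rightarrow> nat set" where
  "badb eps xs m b = {j. j < m \<and> \<not> (\<not> has_large_item eps xs b j \<or> large_load eps xs b j > 1/2)}"

lemma opt_le_used:
  assumes "is_packing xs m b"
  shows "OPT xs \<le> card (usedb xs b)"
proof -
  let ?U = "usedb xs b"
  have fin: "finite ?U" unfolding usedb_def by simp
  obtain h where h: "bij_betw h {0..<card ?U} ?U"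
    using ex_bij_betw_nat_finite[OF fin] by blast
  define b2 where "b2 = (\<lambda>i. inv_into {0..<card ?U} h (b i))"
  have inU: "b i \<in> ?U" if "i < length xs" for i using that unfolding usedb_def by auto
  have b2lt: "b2 i < card ?U" if "i < length xs" for i
    using inU[OF that] h unfolding b2_def
    by (metis atLeastLessThan_iff bij_betw_def inv_into_into)
  have hb2: "h (b2 i) = b i" if "i < length xs" for i
    using inU[OF that] h unfolding b2_def
    by (simp add: bij_betw_inv_into_right)
  have eqset: "{i. i < length xs \<and> b2 i = j} = {i. i < length xs \<and> b i = h j}"
    if "j < card ?U" for j
  proof (intro set_eqI iffI)
    fix i assume "i \<in> {i. i < length xs \<and> b2 i = j}"
    then show "i \<in> {i. i < length xs \<and> b i = h j}" using hb2 by auto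
  next
    fix i assume a: "i \<in> {i. i < length xs \<and> b i = h j}"
    then have "b2 i = inv_into {0..<card ?U} h (h j)" unfolding b2_def by simp
    also have "\<dots> = j" using h that
      by (simp add: bij_betw_def inv_into_f_f)
    finally show "i \<in> {i. i < length xs \<and> b2 i = j}" using a by simp
  qed
  have "is_packing xs (card ?U) b2"
    unfolding is_packing_def
  proof (intro conjI allI impI)
    fix i assume "i < length xs" then show "b2 i < card ?U" by (rule b2lt)
  next
    fix j assume j: "j < card ?U"
    have "bin_load xs b2 j = bin_load xs b (h j)"
      unfolding bin_load_def using eqset[OF j] by simp
    also have "\<dots> \<le> 1"
    proof -
      have "h j \<in> ?U" using h j by (auto simp: bij_betw_def)
      then obtain i where "i < length xs" "h j = b i" unfolding usedb_def by auto
      then have "h j < m" using assms unfolding is_packing_def by auto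
      then show ?thesis using assms unfolding is_packing_def by auto
    qed
    finally show "bin_load xs b2 j \<le> 1" .
  qed
  then show ?thesis unfolding OPT_def by (metis Least_le)
qed

lemma large_eq_bin:
  assumes "\<forall>x\<in>set xs. eps \<le> x"
  shows "large_load eps xs b j = bin_load xs b j"
proof -
  have "{i. i < length xs \<and> b i = j \<and> eps \<le> xs ! i} = {i. i < length xs \<and> b i = j}"
    using assms nth_mem by blast
  then show ?thesis unfolding large_load_def bin_load_def by simp
qed

lemma merge_step:
  assumes A: "\<forall>x\<in>set xs. eps \<le> x"
    and P: "is_packing xs m b"
    and j1: "j1 \<in> badb eps xs m b" and j2: "j2 \<in> badb eps xs m b" and ne: "j1 \<noteq> j2"
  defines "b' \<equiv> (\<lambda>i. if b i = j2 then j1 else b i)"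
  shows "is_packing xs m b'" and "usedb xs b' = usedb xs b - {j2}"
    and "badb eps xs m b - {j1, j2} \<subseteq> badb eps xs m b'"
    and "badb eps xs m b' \<subseteq> badb eps xs m b - {j2}"
proof -
  have j1m: "j1 < m" and l1: "bin_load xs b j1 \<le> 1/2" and h1: "has_large_item eps xs b j1"
    using j1 large_eq_bin[OF A] unfolding badb_def by auto
  have j2m: "j2 < m" and l2: "bin_load xs b j2 \<le> 1/2" and h2: "has_large_item eps xs b j2"
    using j2 large_eq_bin[OF A] unfolding badb_def by auto
  have same: "{i. i < length xs \<and> b' i = j} = {i. i < length xs \<and> b i = j}"
    if "j \<noteq> j1" "j \<noteq> j2" for j using that unfolding b'_def by auto
  have loadsame: "bin_load xs b' j = bin_load xs b j" if "j \<noteq> j1" "j \<noteq> j2" for j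
    unfolding bin_load_def using same[OF that] by simp
  have hlsame: "has_large_item eps xs b' j = has_large_item eps xs b j" if "j \<noteq> j1" "j \<noteq> j2" for j
    unfolding has_large_item_def using that unfolding b'_def by auto
  have empty2: "\<not> has_large_item eps xs b' j2" unfolding has_large_item_def b'_def using ne by auto
  have split1: "{i. i < length xs \<and> b' i = j1} = {i. i < length xs \<and> b i = j1} \<union> {i. i < length xs \<and> b i = j2}"
    unfolding b'_def using ne by auto
  have load1: "bin_load xs b' j1 = bin_load xs b j1 + bin_load xs b j2"
    unfolding bin_load_def split1
    by (rule sum.union_disjoint) (use ne in auto)
  show pk: "is_packing xs m b'"
    unfolding is_packing_def
  proof (intro conjI allI impI)
    fix i assume "i < length xs" then show "b' i < m" using P j1m unfolding is_packing_def b'_def by auto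
  next
    fix j assume "j < m"
    show "bin_load xs b' j \<le> 1"
    proof (cases "j = j1")
      case True then show ?thesis using load1 l1 l2 by simp
    next
      case False
      show ?thesis
      proof (cases "j = j2")
        case True
        have "{i. i < length xs \<and> b' i = j2} = {}" unfolding b'_def using ne by auto
        then show ?thesis using True unfolding bin_load_def by (simp del: Collect_empty_eq)
      next
        case F2: False
        then show ?thesis using loadsame[OF False F2] P \<open>j < m\<close> unfolding is_packing_def by simp
      qed
    qed
  qed
  show "usedb xs b' = usedb xs b - {j2}"
  proof (intro set_eqI iffI)
    fix j assume "j \<in> usedb xs b'"
    then obtain i where i: "i < length xs" "j = b' i" unfolding usedb_def by auto
    then show "j \<in> usedb xs b - {j2}"
    proof (cases "b i = j2")
      case True
      obtain i1 where "i1 < length xs" "b i1 = j1" using h1 unfolding has_large_item_def by auto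
      then show ?thesis using True i ne unfolding usedb_def b'_def by auto
    next
      case False then show ?thesis using i unfolding usedb_def b'_def by auto
    qed
  next
    fix j assume "j \<in> usedb xs b - {j2}"
    then obtain i where i: "i < length xs" "j = b i" "j \<noteq> j2" unfolding usedb_def by auto
    then show "j \<in> usedb xs b'" unfolding usedb_def b'_def by auto
  qed
  show "badb eps xs m b - {j1, j2} \<subseteq> badb eps xs m b'"
    unfolding badb_def using hlsame loadsame large_eq_bin[OF A] by auto
  show "badb eps xs m b' \<subseteq> badb eps xs m b - {j2}"
  proof
    fix j assume j: "j \<in> badb eps xs m b'"
    then have "j \<noteq> j2" using empty2 unfolding badb_def by auto
    moreover have "j \<in> badb eps xs m b"
    proof (cases "j = j1")
      case True then show ?thesis using j1 by simp
    next
      case False then show ?thesis using j \<open>j \<noteq> j2\<close> hlsame loadsame large_eq_bin[OF A]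
        unfolding badb_def by auto
    qed
    ultimately show "j \<in> badb eps xs m b - {j2}" by simp
  qed
qed

lemma finite_badb: "finite (badb eps xs m b)" unfolding badb_def by simp
lemma finite_usedb: "finite (usedb xs b)" unfolding usedb_def by simp

lemma induct_main:
  assumes A: "\<forall>x\<in>set xs. eps \<le> x"
  shows "\<forall>b. is_packing xs m b \<longrightarrow> card (badb eps xs m b) = k \<longrightarrow>
           2 * real (OPT xs) \<le> 2 * real (card (usedb xs b)) - real k + 1"
proof (induction k rule: less_induct)
  case (less k)
  show ?case
  proof (intro allI impI)
    fix b assume P: "is_packing xs m b" and K: "card (badb eps xs m b) = k"
    have o: "OPT xs \<le> card (usedb xs b)" by (rule opt_le_used[OF P])
    show "2 * real (OPT xs) \<le> 2 * real (card (usedb xs b)) - real k + 1"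
    proof (cases "k \<le> 1")
      case True then show ?thesis using o by simp
    next
      case False
      then have "2 \<le> card (badb eps xs m b)" using K by simp
      then obtain j1 j2 where j: "j1 \<in> badb eps xs m b" "j2 \<in> badb eps xs m b" "j1 \<noteq> j2"
        by (metis One_nat_def card_le_Suc0_iff_eq finite_badb not_less_eq_eq numeral_2_eq_2)
      define b' where "b' = (\<lambda>i. if b i = j2 then j1 else b i)"
      note M = merge_step[OF A P j, folded b'_def]
      have j2u: "j2 \<in> usedb xs b"
        using j(2) unfolding badb_def has_large_item_def usedb_def by auto
      have cu: "card (usedb xs b') = card (usedb xs b) - 1"
        using M(2) j2u finite_usedb by simp
      have cu1: "card (usedb xs b) \<ge> 1" using j2u finite_usedb
        by (metis One_nat_def Suc_leI card_gt_0_iff empty_iff)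
      have "card (badb eps xs m b - {j1, j2}) \<le> card (badb eps xs m b')"
        using M(3) finite_badb card_mono by metis
      moreover have "card (badb eps xs m b - {j1, j2}) = k - 2"
        using j K finite_badb by (simp add: card_Diff_subset)
      moreover have "card (badb eps xs m b') \<le> card (badb eps xs m b - {j2})"
        using M(4) finite_badb card_mono by (metis finite_Diff)
      moreover have "card (badb eps xs m b - {j2}) = k - 1" using j K finite_badb by simp
      ultimately obtain k' where k': "k' = card (badb eps xs m b')" "k - 2 \<le> k'" "k' < k"
        using False by fastforce
      have "2 * real (OPT xs) \<le> 2 * real (card (usedb xs b')) - real k' + 1"
        using less k'(3) M(1) k'(1) by blast
      then show ?thesis using cu cu1 k' False by (simp add: of_nat_diff)
    qed
  qed
qed

theorem mainTheorem4:
  fixes eps :: real and f :: "real \<Rightarrow> real" and xs :: "real list"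
    and m :: nat and b :: "nat \<Rightarrow> nat"
  assumes "eps > 0"
    and "bp_input xs"
    and "\<forall>x\<in>set xs. eps \<le> x"
    and "is_packing xs m b"
    and "real m \<le> (1 + eps) * real (OPT xs) + f (1 / eps)"
  shows "real (card {j. j < m \<and> \<not> (\<not> has_large_item eps xs b j \<or> large_load eps xs b j > 1/2)})
           \<le> 2 * eps * real (OPT xs) + 2 * f (1 / eps) + 3"
proof -
  have i: "2 * real (OPT xs) \<le> 2 * real (card (usedb xs b)) - real (card (badb eps xs m b)) + 1"
    using induct_main[OF assms(3)] assms(4) by blast
  have "usedb xs b \<subseteq> {..<m}" using assms(4) unfolding usedb_def is_packing_def by auto
  then have "card (usedb xs b) \<le> m" by (metis card_lessThan card_mono finite_lessThan)
  then have "real (card (badb eps xs m b)) \<le> 2 * real m - 2 * real (OPT xs) + 1" using i by linarith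
  then show ?thesis using assms(5) unfolding badb_def by (simp add: algebra_simps)
qed

end
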